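(* Let $(X_\alpha,\tau_\alpha)_{\alpha\in\Omega}$ be a family of topological spaces and let $X=\sum_{\alpha\in\Omega}X_\alpha$ be their topological sum (disjoint union). Then $X$ is a kd-space if and only if each $X_\alpha$ is a kd-space.
   Context: A space is a kd-space if every compact subset is $\delta$-closed. In a space $Y$, a set $U$ is regular open if $U=\mathrm{Int}(\mathrm{Cl}(U))$; a point $x$ is a $\delta$-cluster point of $B\subseteq Y$ if $B\cap U\neq\emptyset$ for every regular open $U\ni x$; $B$ is $\delta$-closed if it contains all its $\delta$-cluster points. *)

theory Defs
  imports "HOL-Analysis.Analysis"
begin

definition regular_open :: "'a topology \<Rightarrow> 'a set \<Rightarrow> bool" where
  "regular_open X U \<longleftrightarrow> U = X interior_of (X closure_of U)"

definition delta_cluster_point :: "'a topology \<Rightarrow> 'a set \<Rightarrow> 'a \<Rightarrow> bool" where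
  "delta_cluster_point X B x \<longleftrightarrow> x \<in> topspace X \<and>
     (\<forall>U. regular_open X U \<and> x \<in> U \<longrightarrow> B \<inter> U \<noteq> {})"

definition delta_closedin :: "'a topology \<Rightarrow> 'a set \<Rightarrow> bool" where
  "delta_closedin X B \<longleftrightarrow> B \<subseteq> topspace X \<and>
     (\<forall>x. delta_cluster_point X B x \<longrightarrow> x \<in> B)"

definition kd_space :: "'a topology \<Rightarrow> bool" where
  "kd_space X \<longleftrightarrow> (\<forall>K. compactin X K \<longrightarrow> delta_closedin X K)"

end

theory Submission
  imports Defs
begin

lemma sum_closure_of:
  fixes X :: "'i \<Rightarrow> 'a topology"
  shows
  "sum_topology X I closure_of U = Sigma I (\<lambda>i. X i closure_of {x. (i,x) \<in> U})"
proof (rule set_eqI)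
  fix p :: "'i \<times> 'a"
  obtain i x where p: "p = (i,x)" by (cases p) blast
  show "p \<in> sum_topology X I closure_of U \<longleftrightarrow> p \<in> Sigma I (\<lambda>i. X i closure_of {x. (i,x) \<in> U})"
  proof
    assume L: "p \<in> sum_topology X I closure_of U"
    have L1: "p \<in> topspace (sum_topology X I)"
      using L unfolding in_closure_of by (rule conjunct1)
    have L2: "\<forall>T. p \<in> T \<and> openin (sum_topology X I) T \<longrightarrow> (\<exists>y. y \<in> U \<and> y \<in> T)"
      using L unfolding in_closure_of by (rule conjunct2)
    from L1
    have iI: "i \<in> I" and xt: "x \<in> topspace (X i)"
      by (simp_all add: p)
    have "\<exists>y. y \<in> {y. (i,y) \<in> U} \<and> y \<in> T" if "x \<in> T \<and> openin (X i) T" for T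
    proof -
      have o1: "openin (sum_topology X I) (Sigma I (\<lambda>j. if j = i then T else {}))"
        using that by (simp add: openin_disjoint_union)
      have p1: "p \<in> Sigma I (\<lambda>j. if j = i then T else {})" using p iI that by simp
      have "\<exists>q. q \<in> U \<and> q \<in> Sigma I (\<lambda>j. if j = i then T else {})"
        using L2[rule_format, OF conjI[OF p1 o1]] .
      then obtain q where q: "q \<in> U" "q \<in> Sigma I (\<lambda>j. if j = i then T else {})"
        by blast
      obtain j y where qj: "q = (j,y)" by (cases q) blast
      have "j = i" "y \<in> T" using q(2) unfolding qj by (simp_all split: if_splits)
      then show ?thesis using q(1) qj by blast
    qed
    then have "x \<in> X i closure_of {x. (i,x) \<in> U}"
      using xt unfolding in_closure_of by blast
    then show "p \<in> Sigma I (\<lambda>i. X i closure_of {x. (i,x) \<in> U})"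
      using p iI by simp
  next
    assume R: "p \<in> Sigma I (\<lambda>i. X i closure_of {x. (i,x) \<in> U})"
    then have iI: "i \<in> I" and xc: "x \<in> X i closure_of {x. (i,x) \<in> U}" using p by simp_all
    then have xt: "x \<in> topspace (X i)" unfolding in_closure_of by blast
    have "\<exists>q. q \<in> U \<and> q \<in> T" if "p \<in> T \<and> openin (sum_topology X I) T" for T
    proof -
      have o1: "openin (X i) {y. (i,y) \<in> T}" using that iI by (simp add: openin_sum_topology)
      have p1: "x \<in> {y. (i,y) \<in> T}" using that p by simp
      have xc2: "\<forall>T. x \<in> T \<and> openin (X i) T \<longrightarrow> (\<exists>y. y \<in> {x. (i,x) \<in> U} \<and> y \<in> T)"
        using xc unfolding in_closure_of by (rule conjunct2)
      have "\<exists>y. y \<in> {y. (i,y) \<in> U} \<and> y \<in> {y. (i,y) \<in> T}"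
        using xc2[rule_format, OF conjI[OF p1 o1]] .
      then show ?thesis by blast
    qed
    moreover have "p \<in> topspace (sum_topology X I)" using p iI xt by simp
    ultimately show "p \<in> sum_topology X I closure_of U"
      unfolding in_closure_of by (intro conjI allI impI) auto
  qed
qed

lemma sum_interior_of:
  "sum_topology X I interior_of U = Sigma I (\<lambda>i. X i interior_of {x. (i,x) \<in> U})"
proof -
  have e: "X i closure_of {x. (i,x) \<in> Sigma I (topspace \<circ> X) - U}
       = X i closure_of (topspace (X i) - {x. (i,x) \<in> U})" if "i \<in> I" for i
  proof -
    have "{x. (i,x) \<in> Sigma I (topspace \<circ> X) - U} = topspace (X i) - {x. (i,x) \<in> U}"
      using that by auto
    then show ?thesis by simp
  qed
  have c: "sum_topology X I closure_of (topspace (sum_topology X I) - U)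
        = Sigma I (\<lambda>i. X i closure_of (topspace (X i) - {x. (i,x) \<in> U}))"
    unfolding sum_closure_of topspace_sum_topology
    by (rule Sigma_cong[OF refl]) (rule e)
  have d: "topspace (sum_topology X I) - Sigma I (\<lambda>i. X i closure_of (topspace (X i) - {x. (i,x) \<in> U}))
     = Sigma I (\<lambda>i. topspace (X i) - X i closure_of (topspace (X i) - {x. (i,x) \<in> U}))"
    by auto
  show ?thesis
    unfolding interior_of_closure_of[of "sum_topology X I"] c d
    by (rule Sigma_cong[OF refl]) (simp add: interior_of_closure_of)
qed

lemma sum_regular_open:
  "regular_open (sum_topology X I) U \<longleftrightarrow>
     U = Sigma I (\<lambda>i. X i interior_of (X i closure_of {x. (i,x) \<in> U}))"
proof -
  have "{x. (i,x) \<in> Sigma I (\<lambda>i. X i closure_of {x. (i,x) \<in> U})} = X i closure_of {x. (i,x) \<in> U}"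
    if "i \<in> I" for i using that by auto
  then show ?thesis
    unfolding regular_open_def sum_interior_of sum_closure_of
    by (intro arg_cong[where f="\<lambda>S. U = S"] Sigma_cong) auto
qed

lemma slice_regular_open:
  assumes "i \<in> I" "regular_open (sum_topology X I) U"
  shows "regular_open (X i) {x. (i,x) \<in> U}"
proof -
  have "{x. (i,x) \<in> U} = X i interior_of (X i closure_of {x. (i,x) \<in> U})"
  proof -
    let ?F = "\<lambda>i. X i interior_of (X i closure_of {x. (i,x) \<in> U})"
    have U: "U = Sigma I ?F" using assms(2) sum_regular_open[of X I U] by blast
    have "{x. (i,x) \<in> Sigma I ?F} = ?F i" using assms(1) by blast
    moreover have "{x. (i,x) \<in> U} = {x. (i,x) \<in> Sigma I ?F}"
      using arg_cong[OF U, of "\<lambda>S. {x. (i,x) \<in> S}"] .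
    ultimately show ?thesis by (rule trans[rotated])
  qed
  then show ?thesis by (simp add: regular_open_def)
qed

lemma single_regular_open:
  assumes "i \<in> I" "regular_open (X i) V"
  shows "regular_open (sum_topology X I) ({i} \<times> V)"
proof -
  have s: "{x. (j,x) \<in> {i} \<times> V} = (if j = i then V else {})" for j by auto
  have "V \<subseteq> topspace (X i)" using assms(2) unfolding regular_open_def
    by (metis interior_of_subset_topspace)
  have "Sigma I (\<lambda>j. X j interior_of (X j closure_of {x. (j,x) \<in> {i} \<times> V}))
        = Sigma I (\<lambda>j. if j = i then V else {})"
    unfolding s using assms(2) by (intro Sigma_cong) (auto simp: regular_open_def)
  also have "\<dots> = {i} \<times> V" using assms(1) by (auto split: if_splits)
  finally show ?thesis by (simp add: sum_regular_open)
qed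

lemma slice_compact:
  assumes "i \<in> I" "compactin (sum_topology X I) K"
  shows "compactin (X i) {x. (i,x) \<in> K}"
proof -
  have cl: "closedin (sum_topology X I) (Pair i ` topspace (X i))"
    using closed_map_component_injection[OF assms(1), of X]
    by (simp add: closed_map_def)
  have eq: "Pair i ` {x. (i,x) \<in> K} = Pair i ` topspace (X i) \<inter> K"
    using compactin_subset_topspace[OF assms(2)] by auto
  have "compactin (sum_topology X I) (Pair i ` {x. (i,x) \<in> K})"
    unfolding eq using closed_Int_compactin[OF cl assms(2)] .
  then have c: "compactin (subtopology (sum_topology X I) (Pair i ` topspace (X i))) (Pair i ` {x. (i,x) \<in> K})"
    unfolding compactin_subtopology eq by auto
  have sub: "{x. (i,x) \<in> K} \<subseteq> topspace (X i)"
    using compactin_subset_topspace[OF assms(2)] by auto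
  show ?thesis
    using embedding_map_component_injection[OF assms(1), of X] c sub
    unfolding embedding_map_def
    using homeomorphic_map_compactness by blast
qed

theorem mainTheorem6:
  fixes X :: "'i \<Rightarrow> 'a topology" and \<Omega> :: "'i set"
  shows "kd_space (sum_topology X \<Omega>) \<longleftrightarrow> (\<forall>\<alpha>\<in>\<Omega>. kd_space (X \<alpha>))"
proof
  assume S: "kd_space (sum_topology X \<Omega>)"
  show "\<forall>\<alpha>\<in>\<Omega>. kd_space (X \<alpha>)"
  proof (intro ballI, unfold kd_space_def, intro allI impI)
    fix a K assume a: "a \<in> \<Omega>" and K: "compactin (X a) K"
    have "compactin (sum_topology X \<Omega>) (Pair a ` K)"
      using image_compactin[OF K continuous_map_component_injection[OF a, of X]] by simp
    then have dc: "delta_closedin (sum_topology X \<Omega>) (Pair a ` K)"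
      using S by (simp add: kd_space_def)
    have "x \<in> K" if x: "delta_cluster_point (X a) K x" for x
    proof -
      have "delta_cluster_point (sum_topology X \<Omega>) (Pair a ` K) (a,x)"
        unfolding delta_cluster_point_def
      proof (intro conjI allI impI)
        show "(a,x) \<in> topspace (sum_topology X \<Omega>)"
          using x a by (auto simp: delta_cluster_point_def)
        fix U assume U: "regular_open (sum_topology X \<Omega>) U \<and> (a,x) \<in> U"
        then have "K \<inter> {y. (a,y) \<in> U} \<noteq> {}"
          using x slice_regular_open[OF a] by (auto simp: delta_cluster_point_def)
        then show "Pair a ` K \<inter> U \<noteq> {}" by auto
      qed
      then have "(a,x) \<in> Pair a ` K" using dc by (simp add: delta_closedin_def)
      then show ?thesis by auto
    qed
    then show "delta_closedin (X a) K"
      using compactin_subset_topspace[OF K] by (auto simp: delta_closedin_def)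
  qed
next
  assume A: "\<forall>\<alpha>\<in>\<Omega>. kd_space (X \<alpha>)"
  show "kd_space (sum_topology X \<Omega>)"
    unfolding kd_space_def
  proof (intro allI impI)
    fix K assume K: "compactin (sum_topology X \<Omega>) K"
    have "p \<in> K" if p: "delta_cluster_point (sum_topology X \<Omega>) K p" for p
    proof -
      obtain i x where px: "p = (i,x)" by fastforce
      have i: "i \<in> \<Omega>" and xt: "x \<in> topspace (X i)"
        using p px by (auto simp: delta_cluster_point_def)
      have dc: "delta_closedin (X i) {y. (i,y) \<in> K}"
        using A i slice_compact[OF i K] by (simp add: kd_space_def)
      have "delta_cluster_point (X i) {y. (i,y) \<in> K} x"
        unfolding delta_cluster_point_def
      proof (intro conjI allI impI)
        show "x \<in> topspace (X i)" by (rule xt)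
        fix V assume V: "regular_open (X i) V \<and> x \<in> V"
        then have "K \<inter> ({i} \<times> V) \<noteq> {}"
          using p px single_regular_open[OF i] by (auto simp: delta_cluster_point_def)
        then show "{y. (i,y) \<in> K} \<inter> V \<noteq> {}" by auto
      qed
      then show ?thesis using dc px by (simp add: delta_closedin_def)
    qed
    then show "delta_closedin (sum_topology X \<Omega>) K"
      using compactin_subset_topspace[OF K] by (auto simp: delta_closedin_def)
  qed
qed

end
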